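(* Let $m\geq1$ and let $\{\Lambda_i\}_{i\geq1}$ be an infinite family of proper lattices in $\mathbb{Z}^m$ that are pairwise coprime. Then there is an infinite set $\{i_k\}_{k\geq1}$ of indices such that the integers $[\mathbb{Z}^m:\Lambda_{i_k}]$, $k\geq1$, are pairwise coprime.
   Context: A lattice in $\mathbb{Z}^m$ is a subgroup of finite index; it is proper if it is not $\mathbb{Z}^m$. Proper lattices $\Lambda,\Lambda'$ are coprime if $\Lambda+\Lambda'=\mathbb{Z}^m$. *)

theory Defs
  imports "HOL-Analysis.Analysis"
begin

text \<open>Z^m is modelled as the type int^'m for a finite index type 'm (so m = CARD('m) >= 1).\<close>

definition lattice_cosets :: "(int^'m) set \<Rightarrow> (int^'m) set set" where
  "lattice_cosets L = range (\<lambda>x. (\<lambda>y. x + y) ` L)"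

definition additive_subgroup :: "(int^'m) set \<Rightarrow> bool" where
  "additive_subgroup L \<longleftrightarrow> 0 \<in> L \<and> (\<forall>x\<in>L. \<forall>y\<in>L. x + y \<in> L) \<and> (\<forall>x\<in>L. - x \<in> L)"

definition is_lattice :: "(int^'m) set \<Rightarrow> bool" where
  "is_lattice L \<longleftrightarrow> additive_subgroup L \<and> finite (lattice_cosets L)"

definition lattice_index :: "(int^'m) set \<Rightarrow> nat" where
  "lattice_index L = card (lattice_cosets L)"

definition proper_lattice :: "(int^'m) set \<Rightarrow> bool" where
  "proper_lattice L \<longleftrightarrow> is_lattice L \<and> L \<noteq> UNIV"

definition lattices_coprime :: "(int^'m) set \<Rightarrow> (int^'m) set \<Rightarrow> bool" where
  "lattices_coprime L L' \<longleftrightarrow> {a + b | a b. a \<in> L \<and> b \<in> L'} = UNIV"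

end

theory Submission
  imports Defs "HOL-Algebra.Sylow" "HOL-Algebra.Multiplicative_Group" "HOL-Library.Ramsey"
begin
definition Zm :: "(int^'m) monoid" where "Zm = \<lparr>carrier = UNIV, mult = (+), one = 0\<rparr>"
lemma Zm_simps[simp]: "carrier Zm = UNIV" "mult Zm = (+)" "one Zm = 0"
  by (auto simp: Zm_def)
lemma Zm_comm_group: "comm_group (Zm :: (int^'m) monoid)"
proof (rule comm_groupI)
  fix x :: "int^'m" 
  show "\<exists>y\<in>carrier Zm. y \<otimes>\<^bsub>Zm\<^esub> x = \<one>\<^bsub>Zm\<^esub>" by (rule bexI[of _ "-x"]) auto
qed (auto simp: add.assoc add.commute)
lemma Zm_inv: "inv\<^bsub>(Zm :: (int^'m) monoid)\<^esub> x = - x"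
proof -
  interpret comm_group "Zm :: (int^'m) monoid" by (rule Zm_comm_group)
  show ?thesis by (rule inv_equality) auto
qed

lemma Zm_pow: "x [^]\<^bsub>(Zm :: (int^'m) monoid)\<^esub> (n::nat) = int n *s x"
proof (induction n)
  case 0 then show ?case by (simp add: vec_eq_iff)
next
  case (Suc n) then show ?case by (simp add: vec_eq_iff distrib_right)
qed

lemma Zm_rcoset: "L #>\<^bsub>(Zm :: (int^'m) monoid)\<^esub> x = (\<lambda>y. x + y) ` L"
  unfolding r_coset_def by (auto simp: add.commute)

lemma Zm_rcosets: "rcosets\<^bsub>(Zm :: (int^'m) monoid)\<^esub> L = lattice_cosets L"
  unfolding RCOSETS_def lattice_cosets_def Zm_rcoset by auto

lemma Zm_subgroup: "Defs.additive_subgroup L \<Longrightarrow> subgroup L (Zm :: (int^'m) monoid)"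
proof -
  assume a: "Defs.additive_subgroup L"
  interpret comm_group "Zm :: (int^'m) monoid" by (rule Zm_comm_group)
  show ?thesis using a unfolding Defs.additive_subgroup_def
    by (intro subgroupI) (auto simp: Zm_inv)
qed
lemma key:
  fixes L :: "(int^'m) set"
  assumes p: "prime p" and L: "is_lattice L" and dv: "p dvd lattice_index L"
  shows "{a + int p *s b | a b. a \<in> L} \<noteq> UNIV"
proof
  assume surjM: "{a + int p *s b | a b. a \<in> L} = UNIV"
  interpret Z: comm_group "Zm :: (int^'m) monoid" by (rule Zm_comm_group)
  have sg: "subgroup L (Zm :: (int^'m) monoid)"
    using L Zm_subgroup unfolding is_lattice_def by blast
  then interpret N: normal L "Zm :: (int^'m) monoid" by (rule Z.subgroup_imp_normal)
  define G where "G = (Zm :: (int^'m) monoid) Mod L"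
  have grp: "group G" unfolding G_def by (rule N.factorgroup_is_group)
  interpret G: group G by (rule grp)
  have carG: "carrier G = lattice_cosets L"
    by (simp add: G_def FactGroup_def Zm_rcosets)
  have finG: "finite (carrier G)" using L carG unfolding is_lattice_def by simp
  have ordG: "order G = p ^ 1 * (lattice_index L div p)"
    using dv by (simp add: order_def carG lattice_index_def)
  obtain H where H: "subgroup H G" "card H = p"
    using sylow_thm[OF p grp ordG finG] by auto
  have p2: "p \<ge> 2" using p by (simp add: prime_ge_2_nat)
  have "\<not> H \<subseteq> {\<one>\<^bsub>G\<^esub>}"
  proof
    assume "H \<subseteq> {\<one>\<^bsub>G\<^esub>}"
    then have "card H \<le> card {\<one>\<^bsub>G\<^esub>}" by (intro card_mono) auto
    then have "card H \<le> 1" by simp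
    then show False using H p2 by simp
  qed
  then obtain C where C: "C \<in> H" "C \<noteq> \<one>\<^bsub>G\<^esub>" by auto
  interpret HG: group "G\<lparr>carrier := H\<rparr>" by (rule subgroup.subgroup_is_group[OF H(1) grp])
  have e2: "order (G\<lparr>carrier := H\<rparr>) = p" using H(2) unfolding order_def by simp
  have e1: "C [^]\<^bsub>G\<lparr>carrier := H\<rparr>\<^esub> p = \<one>\<^bsub>G\<lparr>carrier := H\<rparr>\<^esub>"
  proof -
    have "C \<in> carrier (G\<lparr>carrier := H\<rparr>)" using C(1) by simp
    from HG.pow_order_eq_1[OF this] show ?thesis by (simp only: e2)
  qed
  have e3: "C [^]\<^bsub>G\<^esub> p = C [^]\<^bsub>G\<lparr>carrier := H\<rparr>\<^esub> p" by (rule G.nat_pow_consistent)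
  have e4: "\<one>\<^bsub>G\<lparr>carrier := H\<rparr>\<^esub> = \<one>\<^bsub>G\<^esub>" by simp
  have Cp: "C [^]\<^bsub>G\<^esub> p = \<one>\<^bsub>G\<^esub>" unfolding e3 e1 e4 by (rule refl)
  have CG: "C \<in> carrier G" by (rule subgroup.mem_carrier[OF H(1) C(1)])
  have hom: "(\<lambda>a. L #>\<^bsub>Zm\<^esub> a) \<in> hom (Zm :: (int^'m) monoid) G"
    unfolding G_def by (rule N.r_coset_hom_Mod)
  have fimg: "(L #>\<^bsub>Zm\<^esub> y) [^]\<^bsub>G\<^esub> p = L #>\<^bsub>Zm\<^esub> (int p *s y)" for y :: "int^'m"
  proof -
    have "y \<in> carrier (Zm :: (int^'m) monoid)" by simp
    from hom_nat_pow[OF hom this Z.is_group grp, of p]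
    show ?thesis unfolding Zm_pow by (rule sym)
  qed
  have carG2: "carrier G = range (\<lambda>a. L #>\<^bsub>Zm\<^esub> a)"
    by (simp add: G_def carrier_FactGroup)
  have "carrier G \<subseteq> (\<lambda>D. D [^]\<^bsub>G\<^esub> p) ` carrier G"
  proof
    fix D assume "D \<in> carrier G"
    then obtain z where z: "D = L #>\<^bsub>Zm\<^esub> z" using carG2 by auto
    have "z \<in> {a + int p *s b | a b. a \<in> L}" using surjM by simp
    then obtain a b where ab: "z = a + int p *s b" "a \<in> L" by auto
    have "z \<in> L #>\<^bsub>Zm\<^esub> (int p *s b)" using ab by (simp add: Zm_rcoset add.commute)
    then have "L #>\<^bsub>Zm\<^esub> (int p *s b) = L #>\<^bsub>Zm\<^esub> z"
      by (intro Z.repr_independence sg) auto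
    then have "D = (L #>\<^bsub>Zm\<^esub> b) [^]\<^bsub>G\<^esub> p" using z fimg by simp
    moreover have "L #>\<^bsub>Zm\<^esub> b \<in> carrier G" using carG2 by auto
    ultimately show "D \<in> (\<lambda>D. D [^]\<^bsub>G\<^esub> p) ` carrier G" by blast
  qed
  then have "inj_on (\<lambda>D. D [^]\<^bsub>G\<^esub> p) (carrier G)" by (rule finite_surj_inj[OF finG])
  moreover have "C [^]\<^bsub>G\<^esub> p = \<one>\<^bsub>G\<^esub> [^]\<^bsub>G\<^esub> p" using Cp by simp
  ultimately have "C = \<one>\<^bsub>G\<^esub>" using CG by (meson G.one_closed inj_onD)
  then show False using C by simp
qed


lemma not_coprime_prime: "\<not> coprime (a::nat) b \<Longrightarrow> \<exists>p. prime p \<and> p dvd a \<and> p dvd b"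
proof -
  assume "\<not> coprime a b"
  then have "gcd a b \<noteq> 1" by (simp add: coprime_iff_gcd_eq_1)
  then obtain p where "prime p" "p dvd gcd a b" using prime_factor_nat by blast
  then show ?thesis by auto
qed

lemma mod_decomp:
  fixes x :: "int^'m" and c :: int
  shows "x = (\<chi> k. x$k mod c) + c *s (\<chi> k. x$k div c)"
  by (simp add: vec_eq_iff mod_mult_div_eq)

lemma M_mod:
  fixes L :: "(int^'m) set" and c :: int
  assumes "Defs.additive_subgroup L"
  shows "x \<in> {a + c *s b | a b. a \<in> L} \<longleftrightarrow> (\<chi> k. x$k mod c) \<in> {a + c *s b | a b. a \<in> L}"
proof -
  let ?r = "(\<chi> k. x$k mod c) :: int^'m" and ?q = "(\<chi> k. x$k div c) :: int^'m"
  have d: "x = ?r + c *s ?q" by (rule mod_decomp)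
  show ?thesis
  proof
    assume "x \<in> {a + c *s b | a b. a \<in> L}"
    then obtain a b where ab: "x = a + c *s b" "a \<in> L" by blast
    have "?r = a + c *s (b - ?q)" using d ab(1) by (simp add: vec_eq_iff algebra_simps)
    then show "?r \<in> {a + c *s b | a b. a \<in> L}" using ab(2) by blast
  next
    assume "?r \<in> {a + c *s b | a b. a \<in> L}"
    then obtain a b where ab: "?r = a + c *s b" "a \<in> L" by blast
    have "x = a + c *s (b + ?q)" using d ab(1) by (simp add: vec_eq_iff algebra_simps)
    then show "x \<in> {a + c *s b | a b. a \<in> L}" using ab(2) by blast
  qed
qed

lemma finite_box: "finite {x :: int^'m. \<forall>k. 0 \<le> x$k \<and> x$k < c}"
proof -
  have "{x :: int^'m. \<forall>k. 0 \<le> x$k \<and> x$k < c} \<subseteq> (\<lambda>f. \<chi> k. f k) ` (Pi\<^sub>E UNIV (\<lambda>_. {0..<c}))"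
  proof
    fix x :: "int^'m" assume "x \<in> {x :: int^'m. \<forall>k. 0 \<le> x$k \<and> x$k < c}"
    then have "(\<lambda>k. x$k) \<in> Pi\<^sub>E UNIV (\<lambda>_. {0..<c})" by auto
    moreover have "x = (\<chi> k. (\<lambda>k. x$k) k)" by simp
    ultimately show "x \<in> (\<lambda>f. \<chi> k. f k) ` (Pi\<^sub>E UNIV (\<lambda>_. {0..<c}))" by blast
  qed
  moreover have "finite ((\<lambda>f. \<chi> k. f k) ` (Pi\<^sub>E (UNIV::'m set) (\<lambda>_. {0..<c})))"
    by (intro finite_imageI finite_PiE) auto
  ultimately show ?thesis by (rule finite_subset)
qed

lemma fin_p:
  fixes \<Lambda> :: "nat \<Rightarrow> (int^'m) set"
  assumes p: "prime p"
    and pl: "\<And>i. proper_lattice (\<Lambda> i)"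
    and cp: "\<And>i j. i \<noteq> j \<Longrightarrow> lattices_coprime (\<Lambda> i) (\<Lambda> j)"
  shows "finite {i. p dvd lattice_index (\<Lambda> i)}"
proof -
  define M where "M i = {a + int p *s b | a b. a \<in> \<Lambda> i}" for i
  define B where "B = {x :: int^'m. \<forall>k. 0 \<le> x$k \<and> x$k < int p}"
  define S where "S = {i. p dvd lattice_index (\<Lambda> i)}"
  have sub: "Defs.additive_subgroup (\<Lambda> i)" for i
    using pl[of i] unfolding proper_lattice_def is_lattice_def by blast
  have p0: "int p > 0" using p prime_gt_0_nat by auto
  have rB: "(\<chi> k. x$k mod int p) \<in> B" for x :: "int^'m"
    using p0 by (simp add: B_def)
  have Meq: "M i = M j" if "M i \<inter> B = M j \<inter> B" for i j
  proof -
    have "x \<in> M i \<longleftrightarrow> x \<in> M j" for x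
    proof -
      have "x \<in> M i \<longleftrightarrow> (\<chi> k. x$k mod int p) \<in> M i"
        unfolding M_def by (rule M_mod[OF sub])
      also have "\<dots> \<longleftrightarrow> (\<chi> k. x$k mod int p) \<in> M j" using that rB[of x] by blast
      also have "\<dots> \<longleftrightarrow> x \<in> M j"
        unfolding M_def by (rule M_mod[OF sub, symmetric])
      finally show ?thesis .
    qed
    then show ?thesis by blast
  qed
  have Mcl: "a + b \<in> M i" if ha: "a \<in> \<Lambda> i" and hb: "b \<in> M i" for a b i
  proof -
    obtain a' b' where "b = a' + int p *s b'" "a' \<in> \<Lambda> i" using hb unfolding M_def by blast
    moreover have "a + a' \<in> \<Lambda> i" using sub[of i] ha \<open>a' \<in> \<Lambda> i\<close>
      unfolding Defs.additive_subgroup_def by blast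
    ultimately have "a + b = (a + a') + int p *s b'" "a + a' \<in> \<Lambda> i" by (simp_all add: add.assoc)
    then show ?thesis unfolding M_def by blast
  qed
  have LM: "a \<in> M i" if "a \<in> \<Lambda> i" for a i
  proof -
    have "a = a + int p *s 0" by simp
    then show ?thesis unfolding M_def using that by blast
  qed
  have "inj_on (\<lambda>i. M i \<inter> B) S"
  proof (rule inj_onI, rule ccontr)
    fix i j assume i: "i \<in> S" and j: "j \<in> S" and e: "M i \<inter> B = M j \<inter> B" and ne: "i \<noteq> j"
    have MM: "M i = M j" using Meq[OF e] .
    have "UNIV \<subseteq> M i"
    proof
      fix z :: "int^'m"
      have "z \<in> {a + b | a b. a \<in> \<Lambda> i \<and> b \<in> \<Lambda> j}" using cp[OF ne] unfolding lattices_coprime_def by simp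
      then obtain a b where ab: "z = a + b" "a \<in> \<Lambda> i" "b \<in> \<Lambda> j" by blast
      have "b \<in> M i" using LM[OF ab(3)] MM by simp
      then show "z \<in> M i" using Mcl[OF ab(2)] ab(1) by simp
    qed
    then have "M i = UNIV" by blast
    moreover have "is_lattice (\<Lambda> i)" using pl[of i] unfolding proper_lattice_def by blast
    ultimately show False using key[OF p _ ] i unfolding S_def M_def by blast
  qed
  moreover have "(\<lambda>i. M i \<inter> B) ` S \<subseteq> Pow B" by blast
  moreover have "finite (Pow B)" unfolding B_def by (simp add: finite_box)
  ultimately have "finite S" by (rule inj_on_finite)
  then show ?thesis unfolding S_def .
qed


lemma index_pos: "is_lattice L \<Longrightarrow> lattice_index L > 0"
proof -
  assume "is_lattice L"
  then have "finite (lattice_cosets L)" unfolding is_lattice_def by blast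
  moreover have "lattice_cosets L \<noteq> {}" unfolding lattice_cosets_def by blast
  ultimately show ?thesis unfolding lattice_index_def by (simp add: card_gt_0_iff)
qed

theorem proposition3p16:
  fixes \<Lambda> :: "nat \<Rightarrow> (int^'m) set"
  assumes "\<And>i. proper_lattice (\<Lambda> i)"
    and "\<And>i j. i \<noteq> j \<Longrightarrow> lattices_coprime (\<Lambda> i) (\<Lambda> j)"
  shows "\<exists>I :: nat set. infinite I \<and>
           (\<forall>i\<in>I. \<forall>j\<in>I. i \<noteq> j \<longrightarrow> coprime (lattice_index (\<Lambda> i)) (lattice_index (\<Lambda> j)))"
proof -
  define n where "n i = lattice_index (\<Lambda> i)" for i
  have bad_fin: "finite {j. \<not> coprime (n i) (n j)}" for i
  proof -
    have npos: "n i > 0" unfolding n_def using assms(1)[of i] index_pos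
      unfolding proper_lattice_def by blast
    define P where "P = {p. prime p \<and> p dvd n i}"
    have "{j. \<not> coprime (n i) (n j)} \<subseteq> (\<Union>p\<in>P. {j. p dvd n j})"
    proof
      fix j assume "j \<in> {j. \<not> coprime (n i) (n j)}"
      then obtain p where "prime p" "p dvd n i" "p dvd n j" using not_coprime_prime by blast
      then show "j \<in> (\<Union>p\<in>P. {j. p dvd n j})" unfolding P_def by blast
    qed
    moreover have "finite (\<Union>p\<in>P. {j. p dvd n j})"
    proof (rule finite_UN_I)
      show "finite P" unfolding P_def
        by (rule finite_subset[of _ "{..n i}"]) (use npos dvd_imp_le in auto)
      show "finite {j. p dvd n j}" if "p \<in> P" for p
        unfolding n_def by (rule fin_p) (use that assms in \<open>auto simp: P_def\<close>)
    qed
    ultimately show ?thesis by (rule finite_subset)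
  qed
  define f where "f X = (if \<forall>i\<in>X. \<forall>j\<in>X. i \<noteq> j \<longrightarrow> coprime (n i) (n j) then 0 else 1::nat)" for X :: "nat set"
  have "\<forall>X. X \<subseteq> (UNIV::nat set) \<and> finite X \<and> card X = 2 \<longrightarrow> f X < 2" unfolding f_def by simp
  from Ramsey[OF infinite_UNIV_nat this] obtain Y t where Y: "infinite Y" "t < 2"
    "\<forall>X. X \<subseteq> Y \<and> finite X \<and> card X = 2 \<longrightarrow> f X = t" by blast
  have pair: "f {i, j} = t" if "i \<in> Y" "j \<in> Y" "i \<noteq> j" for i j
  proof -
    have "{i, j} \<subseteq> Y \<and> finite {i, j} \<and> card {i, j} = 2" using that by simp
    then show ?thesis using Y(3) by blast
  qed
  show ?thesis
  proof (cases "t = 0")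
    case True
    have "coprime (n i) (n j)" if h: "i \<in> Y" "j \<in> Y" "i \<noteq> j" for i j
    proof -
      have "f {i, j} = 0" using pair[OF h] True by simp
      then have "\<forall>a\<in>{i,j}. \<forall>b\<in>{i,j}. a \<noteq> b \<longrightarrow> coprime (n a) (n b)"
        unfolding f_def by (metis one_neq_zero)
      then show ?thesis using h(3) by blast
    qed
    then have "\<forall>i\<in>Y. \<forall>j\<in>Y. i \<noteq> j \<longrightarrow> coprime (lattice_index (\<Lambda> i)) (lattice_index (\<Lambda> j))"
      unfolding n_def by blast
    then show ?thesis using Y(1) by blast
  next
    case False
    then have t1: "t = 1" using Y(2) by simp
    obtain i where i: "i \<in> Y" using Y(1) by (metis ex_in_conv finite.emptyI)
    have "Y \<subseteq> insert i {j. \<not> coprime (n i) (n j)}"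
    proof
      fix j assume j: "j \<in> Y"
      show "j \<in> insert i {j. \<not> coprime (n i) (n j)}"
      proof (cases "j = i")
        case False
        have "f {i, j} = 1" using pair[OF i j] False t1 by auto
        then have "\<not> (\<forall>a\<in>{i,j}. \<forall>b\<in>{i,j}. a \<noteq> b \<longrightarrow> coprime (n a) (n b))"
          unfolding f_def by (metis zero_neq_one)
        then have "\<not> coprime (n i) (n j) \<or> \<not> coprime (n j) (n i)" by blast
        then have "\<not> coprime (n i) (n j)" by (metis coprime_commute)
        then show ?thesis by simp
      qed simp
    qed
    moreover have "finite (insert i {j. \<not> coprime (n i) (n j)})" using bad_fin[of i] by simp
    ultimately have "finite Y" by (rule finite_subset)
    then show ?thesis using Y(1) by simp
  qed
qed

end
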